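(* Let $A$ be an infinite set and $I$ a set. The family of projections $(\pi_{i})_{i\in I}$, where $\pi_{i}:A^{I}\to A$, $\pi_{i}(f)=f(i)$, consists of elements of $\mathbf{F}(A,I)$ and freely generates $\mathbf{F}(A,I)$ with respect to the variety $V(\Omega(A))$.
   Context: For each $a\in A$ let $\hat{a}$ be a constant symbol, and for each $n\geq1$ and each $f:A^{n}\to A$ let $\hat{f}$ be an $n$-ary operation symbol. $\Omega(A)$ is the algebra with universe $A$ in which $\hat{a}$ is interpreted as $a$ and $\hat{f}$ as $f$; $V(\Omega(A))$ is the variety it generates. For a set $X$, $\Pi(X)$ is the lattice of partitions of $X$ (ordered by refinement); for $h:X\to Y$, $\Pi(h)$ is the partition of $X$ into nonempty fibers of $h$. For a filter $F$ on $\Pi(X)$, $\Omega(A)^{F}=\{h\in A^{X}:\Pi(h)\in F\}$, a subalgebra of $\Omega(A)^{X}$. For $i_{1},\dots,i_{n}\in I$, $\mathcal{P}_{i_{1},\dots,i_{n}}$ is the partition of $A^{I}$ in which $f,g$ lie in the same block iff $f(i_{k})=g(i_{k})$ for $k=1,\dots,n$. $\mathcal{P}(A,I)$ is the filter on $\Pi(A^{I})$ generated by all such partitions (i.e., all partitions of $A^{I}$ coarser than some $\mathcal{P}_{i_{1},\dots,i_{n}}$), and $\mathbf{F}(A,I)=\Omega(A)^{\mathcal{P}(A,I)}$. *)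

theory Defs
  imports Main "HOL-Library.FuncSet"
begin

(* The set A is represented by the universe of a type 'a (assumed infinite).
   Operation symbols of Omega(A): a constant symbol for each a \<in> A, and for
   each n \<ge> 1 and each f : A^n \<rightarrow> A an n-ary symbol.  An n-ary operation
   A^n \<rightarrow> A is represented canonically as a function on lists which is
   'undefined' on lists of length \<noteq> n. *)

datatype 'a osym = Cst 'a | Opr nat "'a list \<Rightarrow> 'a"

fun arity :: "'a osym \<Rightarrow> nat" where
  "arity (Cst a) = 0"
| "arity (Opr n f) = n"

fun valid_sym :: "'a osym \<Rightarrow> bool" where
  "valid_sym (Cst a) = True"
| "valid_sym (Opr n f) = (1 \<le> n \<and> (\<forall>xs. length xs \<noteq> n \<longrightarrow> f xs = undefined))"

type_synonym ('a, 'b) alg = "'b set \<times> ('a osym \<Rightarrow> 'b list \<Rightarrow> 'b)"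

definition is_alg :: "('a, 'b) alg \<Rightarrow> bool" where
  "is_alg B \<longleftrightarrow> (\<forall>s xs. valid_sym s \<and> length xs = arity s \<and> set xs \<subseteq> fst B
      \<longrightarrow> snd B s xs \<in> fst B)"

fun omega_op :: "'a osym \<Rightarrow> 'a list \<Rightarrow> 'a" where
  "omega_op (Cst a) xs = a"
| "omega_op (Opr n f) xs = f xs"

definition Omega :: "('a, 'a) alg" where
  "Omega = (UNIV, omega_op)"

definition Omega_pow :: "'x set \<Rightarrow> ('a, 'x \<Rightarrow> 'a) alg" where
  "Omega_pow X = (X \<rightarrow>\<^sub>E (UNIV :: 'a set),
                  \<lambda>s hs. \<lambda>x\<in>X. omega_op s (map (\<lambda>h. h x) hs))"

definition subuniverse :: "'b set \<Rightarrow> ('a, 'b) alg \<Rightarrow> bool" where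
  "subuniverse C B \<longleftrightarrow> C \<subseteq> fst B \<and>
     (\<forall>s xs. valid_sym s \<and> length xs = arity s \<and> set xs \<subseteq> C \<longrightarrow> snd B s xs \<in> C)"

definition hom :: "('b \<Rightarrow> 'c) \<Rightarrow> ('a, 'b) alg \<Rightarrow> ('a, 'c) alg \<Rightarrow> bool" where
  "hom \<phi> B C \<longleftrightarrow> (\<forall>x\<in>fst B. \<phi> x \<in> fst C) \<and>
     (\<forall>s xs. valid_sym s \<and> length xs = arity s \<and> set xs \<subseteq> fst B
        \<longrightarrow> \<phi> (snd B s xs) = snd C s (map \<phi> xs))"

definition Sg :: "('a, 'b) alg \<Rightarrow> 'b set \<Rightarrow> 'b set" where
  "Sg B X = \<Inter>{C. subuniverse C B \<and> X \<subseteq> C}"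

(* B \<in> HSP(Omega(A)) = V(Omega(A)), with the product index set J drawn from type 'j:
   B is a homomorphic image of a subalgebra of a power Omega(A)^J. *)
definition in_var :: "'j itself \<Rightarrow> ('a, 'b) alg \<Rightarrow> bool" where
  "in_var (_ :: 'j itself) B \<longleftrightarrow> is_alg B \<and>
     (\<exists>(J :: 'j set) C \<phi>. subuniverse C (Omega_pow J :: ('a, 'j \<Rightarrow> 'a) alg) \<and>
        hom \<phi> (C, snd (Omega_pow J :: ('a, 'j \<Rightarrow> 'a) alg)) B \<and> \<phi> ` C = fst B)"

definition is_partition :: "'x set \<Rightarrow> 'x set set \<Rightarrow> bool" where
  "is_partition X P \<longleftrightarrow> (\<forall>p\<in>P. p \<noteq> {} \<and> p \<subseteq> X) \<and> (\<forall>x\<in>X. \<exists>!p. p \<in> P \<and> x \<in> p)"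

definition fiber_partition :: "'x set \<Rightarrow> ('x \<Rightarrow> 'y) \<Rightarrow> 'x set set" where
  "fiber_partition X h = {{x \<in> X. h x = h y} | y. y \<in> X}"

definition coarser :: "'x set set \<Rightarrow> 'x set set \<Rightarrow> bool" where
  "coarser P Q \<longleftrightarrow> (\<forall>p\<in>P. \<exists>q\<in>Q. p \<subseteq> q)"

definition powA :: "'i set \<Rightarrow> ('i \<Rightarrow> 'a) set" where
  "powA I = I \<rightarrow>\<^sub>E (UNIV :: 'a set)"

definition proj_partition :: "'i set \<Rightarrow> 'i list \<Rightarrow> ('i \<Rightarrow> 'a) set set" where
  "proj_partition I is = {{g \<in> powA I. \<forall>k\<in>set is. g k = f k} | f. f \<in> powA I}"

definition PAI :: "'i set \<Rightarrow> ('i \<Rightarrow> 'a) set set set" where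
  "PAI I = {Q. is_partition (powA I) Q \<and>
               (\<exists>is. set is \<subseteq> I \<and> coarser (proj_partition I is) Q)}"

definition Omega_filt :: "'x set \<Rightarrow> 'x set set set \<Rightarrow> ('a, 'x \<Rightarrow> 'a) alg" where
  "Omega_filt X F = ({h \<in> fst (Omega_pow X :: ('a, 'x \<Rightarrow> 'a) alg). fiber_partition X h \<in> F},
                     snd (Omega_pow X :: ('a, 'x \<Rightarrow> 'a) alg))"

definition FAI :: "'i set \<Rightarrow> ('a, ('i \<Rightarrow> 'a) \<Rightarrow> 'a) alg" where
  "FAI I = Omega_filt (powA I) (PAI I)"

definition proj :: "'i set \<Rightarrow> 'i \<Rightarrow> ('i \<Rightarrow> 'a) \<Rightarrow> 'a" where
  "proj I i = (\<lambda>f\<in>powA I. f i)"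

end

theory Submission
  imports Defs
begin

definition dep :: "'i set \<Rightarrow> (('i \<Rightarrow> 'a) \<Rightarrow> 'c) \<Rightarrow> 'i list \<Rightarrow> bool" where
  "dep I h is \<longleftrightarrow> (\<forall>f\<in>powA I. \<forall>g\<in>powA I. (\<forall>k\<in>set is. f k = g k) \<longrightarrow> h f = h g)"

lemma fiber_part: "is_partition X (fiber_partition X h)"
  unfolding is_partition_def fiber_partition_def by auto

lemma coarser_iff:
  fixes h :: "('i \<Rightarrow> 'a) \<Rightarrow> 'c" and I :: "'i set"
  shows "coarser (proj_partition I is) (fiber_partition (powA I) h) \<longleftrightarrow> dep I h is"
proof
  assume c: "coarser (proj_partition I is) (fiber_partition (powA I) h)"
  show "dep I h is" unfolding dep_def
  proof (intro ballI impI)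
    fix f g :: "'i \<Rightarrow> 'a" assume f: "f \<in> powA I" and g: "g \<in> powA I" and e: "\<forall>k\<in>set is. f k = g k"
    let ?p = "{g' \<in> (powA I :: ('i \<Rightarrow> 'a) set). \<forall>k\<in>set is. g' k = f k}"
    have "?p \<in> proj_partition I is" using f unfolding proj_partition_def by blast
    then obtain q where "q \<in> fiber_partition (powA I) h" "?p \<subseteq> q" using c unfolding coarser_def by blast
    then obtain y where q: "q = {x \<in> powA I. h x = h y}" unfolding fiber_partition_def by blast
    have "f \<in> ?p" "g \<in> ?p" using f g e by auto
    then have "f \<in> q" "g \<in> q" using \<open>?p \<subseteq> q\<close> by blast+
    then show "h f = h g" using q by simp
  qed
next
  assume d: "dep I h is"
  show "coarser (proj_partition I is) (fiber_partition (powA I) h)"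
    unfolding coarser_def
  proof
    fix p :: "('i \<Rightarrow> 'a) set" assume "p \<in> proj_partition I is"
    then obtain f where f: "f \<in> powA I" and p: "p = {g \<in> powA I. \<forall>k\<in>set is. g k = f k}"
      unfolding proj_partition_def by blast
    have "{x \<in> powA I. h x = h f} \<in> fiber_partition (powA I) h" using f unfolding fiber_partition_def by blast
    moreover have "p \<subseteq> {x \<in> powA I. h x = h f}"
    proof
      fix x assume "x \<in> p"
      then have x: "x \<in> powA I" "\<forall>k\<in>set is. x k = f k" unfolding p by auto
      then have "h x = h f" using d f unfolding dep_def by blast
      then show "x \<in> {x \<in> powA I. h x = h f}" using x by blast
    qed
    ultimately show "\<exists>q\<in>fiber_partition (powA I) h. p \<subseteq> q" by blast
  qed
qed

lemma carrier_FAI: fixes I :: "'i set" shows "fst (FAI I :: ('a, ('i \<Rightarrow> 'a) \<Rightarrow> 'a) alg) = {h. h \<in> extensional (powA I) \<and> (\<exists>is. set is \<subseteq> I \<and> dep I h is)}"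
proof -
  have "fst (FAI I) = {h \<in> powA I \<rightarrow>\<^sub>E (UNIV::'a set). fiber_partition (powA I) h \<in> PAI I}"
    unfolding FAI_def Omega_filt_def Omega_pow_def by simp
  also have "\<dots> = {h. h \<in> extensional (powA I) \<and> (\<exists>is. set is \<subseteq> I \<and> dep I h is)}"
    unfolding PAI_def coarser_iff[symmetric]
    by (auto simp: PiE_def fiber_part)
  finally show ?thesis .
qed

lemma op_FAI: "snd (FAI I) = (\<lambda>s hs. \<lambda>x\<in>powA I. omega_op s (map (\<lambda>h. h x) hs))"
  unfolding FAI_def Omega_filt_def Omega_pow_def by simp

lemma snd_FAI: "snd (FAI I) = snd (Omega_pow (powA I))"
  unfolding FAI_def Omega_filt_def by simp

lemma powA_mem: "f \<in> powA I \<longleftrightarrow> f \<in> extensional I"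
  unfolding powA_def by (auto simp: PiE_def)


lemma proj_in: fixes I :: "'i set" assumes "i \<in> I"
  shows "(proj I i :: ('i \<Rightarrow> 'a) \<Rightarrow> 'a) \<in> fst (FAI I :: ('a, ('i \<Rightarrow> 'a) \<Rightarrow> 'a) alg)"
proof -
  have "dep I (proj I i :: ('i \<Rightarrow> 'a) \<Rightarrow> 'a) [i]" unfolding dep_def proj_def by auto
  moreover have "set [i] \<subseteq> I" using assms by simp
  moreover have "(proj I i :: ('i \<Rightarrow> 'a) \<Rightarrow> 'a) \<in> extensional (powA I)" unfolding proj_def by simp
  ultimately show ?thesis unfolding carrier_FAI by blast
qed

lemma closed_FAI: fixes I :: "'i set"
  assumes hs: "set hs \<subseteq> fst (FAI I :: ('a, ('i \<Rightarrow> 'a) \<Rightarrow> 'a) alg)"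
  shows "snd (FAI I :: ('a, ('i \<Rightarrow> 'a) \<Rightarrow> 'a) alg) s hs \<in> fst (FAI I :: ('a, ('i \<Rightarrow> 'a) \<Rightarrow> 'a) alg)"
proof -
  have "\<forall>h\<in>set hs. \<exists>is. set is \<subseteq> I \<and> dep I h is" using hs unfolding carrier_FAI by blast
  then obtain J where J: "\<And>h. h \<in> set hs \<Longrightarrow> set (J h) \<subseteq> I \<and> dep I h (J h)" by metis
  let ?is = "concat (map J hs)"
  have "set ?is \<subseteq> I" using J by auto
  moreover have "dep I (snd (FAI I :: ('a, ('i \<Rightarrow> 'a) \<Rightarrow> 'a) alg) s hs) ?is"
    unfolding dep_def op_FAI
  proof (intro ballI impI)
    fix f g :: "'i \<Rightarrow> 'a" assume f: "f \<in> powA I" and g: "g \<in> powA I" and e: "\<forall>k\<in>set ?is. f k = g k"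
    have "map (\<lambda>h. h f) hs = map (\<lambda>h. h g) hs"
    proof (rule map_cong[OF refl])
      fix h assume h: "h \<in> set hs"
      then have "\<forall>k\<in>set (J h). f k = g k" using e by auto
      then show "h f = h g" using J[OF h] f g unfolding dep_def by blast
    qed
    then have "omega_op s (map (\<lambda>h. h f) hs) = omega_op s (map (\<lambda>h. h g) hs)" by (rule arg_cong)
    then show "(\<lambda>x\<in>powA I. omega_op s (map (\<lambda>h. h x) hs)) f = (\<lambda>x\<in>powA I. omega_op s (map (\<lambda>h. h x) hs)) g"
      using f g by (simp del: map_eq_conv)
  qed
  moreover have "snd (FAI I :: ('a, ('i \<Rightarrow> 'a) \<Rightarrow> 'a) alg) s hs \<in> extensional (powA I)"
    unfolding op_FAI by simp
  ultimately show ?thesis unfolding carrier_FAI by blast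
qed

lemma gen_FAI: fixes I :: "'i set"
  assumes C: "subuniverse C (FAI I :: ('a, ('i \<Rightarrow> 'a) \<Rightarrow> 'a) alg)" and P: "proj I ` I \<subseteq> C"
  shows "fst (FAI I :: ('a, ('i \<Rightarrow> 'a) \<Rightarrow> 'a) alg) \<subseteq> C"
proof
  fix h assume "h \<in> fst (FAI I :: ('a, ('i \<Rightarrow> 'a) \<Rightarrow> 'a) alg)"
  then obtain "is" where hE: "h \<in> extensional (powA I)" and isI: "set is \<subseteq> I" and d: "dep I h is"
    unfolding carrier_FAI by blast
  have cl: "\<And>s xs. valid_sym s \<Longrightarrow> length xs = arity s \<Longrightarrow> set xs \<subseteq> C \<Longrightarrow>
      snd (FAI I :: ('a, ('i \<Rightarrow> 'a) \<Rightarrow> 'a) alg) s xs \<in> C"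
    using C unfolding subuniverse_def by blast
  show "h \<in> C"
  proof (cases "is = []")
    case True
    define x0 :: "'i \<Rightarrow> 'a" where "x0 = (\<lambda>_. undefined)"
    have x0: "x0 \<in> powA I" unfolding x0_def powA_mem by (simp add: extensional_def)
    have "snd (FAI I :: ('a, ('i \<Rightarrow> 'a) \<Rightarrow> 'a) alg) (Cst (h x0)) [] = h"
    proof (rule ext)
      fix x show "snd (FAI I :: ('a, ('i \<Rightarrow> 'a) \<Rightarrow> 'a) alg) (Cst (h x0)) [] x = h x"
      proof (cases "x \<in> powA I")
        case xin: True
        have "\<forall>k\<in>set is. x0 k = x k" using True by simp
        then have "h x0 = h x" using d[unfolded dep_def, rule_format, OF x0 xin] by blast
        then show ?thesis using xin unfolding op_FAI by simp
      next
        case False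
        then show ?thesis using hE unfolding op_FAI extensional_def by simp
      qed
    qed
    moreover have "snd (FAI I :: ('a, ('i \<Rightarrow> 'a) \<Rightarrow> 'a) alg) (Cst (h x0)) [] \<in> C"
      by (rule cl) auto
    ultimately show ?thesis by simp
  next
    case False
    define n where "n = length is"
    define F where "F = (\<lambda>xs. if length xs = n then h (SOME f. f \<in> powA I \<and> map f is = xs) else undefined)"
    have v: "valid_sym (Opr n F)" using False unfolding n_def F_def by (cases "is") auto
    have "snd (FAI I :: ('a, ('i \<Rightarrow> 'a) \<Rightarrow> 'a) alg) (Opr n F) (map (proj I) is) \<in> C"
      by (rule cl[OF v]) (use P isI n_def in auto)
    moreover have "snd (FAI I :: ('a, ('i \<Rightarrow> 'a) \<Rightarrow> 'a) alg) (Opr n F) (map (proj I) is) = h"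
    proof (rule ext)
      fix x
      show "snd (FAI I :: ('a, ('i \<Rightarrow> 'a) \<Rightarrow> 'a) alg) (Opr n F) (map (proj I) is) x = h x"
      proof (cases "x \<in> powA I")
        case True
        have m: "map (\<lambda>p. p x) (map (proj I) is) = map x is"
          using True by (simp add: proj_def)
        have ex: "\<exists>f. f \<in> powA I \<and> map f is = map x is" using True by blast
        define f where "f = (SOME f. f \<in> powA I \<and> map f is = map x is)"
        have f: "f \<in> powA I \<and> map f is = map x is" unfolding f_def by (rule someI_ex[OF ex])
        then have "\<forall>k\<in>set is. f k = x k" by (simp add: map_eq_conv)
        then have "h f = h x" using d f True unfolding dep_def by blast
        then show ?thesis using True m unfolding op_FAI F_def f_def n_def by simp
      next
        case False
        then show ?thesis using hE unfolding op_FAI extensional_def by simp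
      qed
    qed
    ultimately show ?thesis by simp
  qed
qed

lemma Sg_FAI: fixes I :: "'i set"
  shows "Sg (FAI I :: ('a, ('i \<Rightarrow> 'a) \<Rightarrow> 'a) alg) (proj I ` I) = fst (FAI I :: ('a, ('i \<Rightarrow> 'a) \<Rightarrow> 'a) alg)"
proof
  have "subuniverse (fst (FAI I :: ('a, ('i \<Rightarrow> 'a) \<Rightarrow> 'a) alg)) (FAI I :: ('a, ('i \<Rightarrow> 'a) \<Rightarrow> 'a) alg)"
    unfolding subuniverse_def
  proof (intro conjI allI impI subset_refl)
    fix s :: "'a osym" and xs assume "valid_sym s \<and> length xs = arity s \<and> set xs \<subseteq> fst (FAI I :: ('a, ('i \<Rightarrow> 'a) \<Rightarrow> 'a) alg)"
    then show "snd (FAI I :: ('a, ('i \<Rightarrow> 'a) \<Rightarrow> 'a) alg) s xs \<in> fst (FAI I :: ('a, ('i \<Rightarrow> 'a) \<Rightarrow> 'a) alg)"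
      by (intro closed_FAI) (simp only:)
  qed
  moreover have "proj I ` I \<subseteq> fst (FAI I :: ('a, ('i \<Rightarrow> 'a) \<Rightarrow> 'a) alg)"
    by (rule image_subsetI) (rule proj_in)
  ultimately show "Sg (FAI I :: ('a, ('i \<Rightarrow> 'a) \<Rightarrow> 'a) alg) (proj I ` I) \<subseteq> fst (FAI I :: ('a, ('i \<Rightarrow> 'a) \<Rightarrow> 'a) alg)"
    unfolding Sg_def by (intro Inter_lower) (simp only: mem_Collect_eq conj_absorb)
  show "fst (FAI I :: ('a, ('i \<Rightarrow> 'a) \<Rightarrow> 'a) alg) \<subseteq> Sg (FAI I :: ('a, ('i \<Rightarrow> 'a) \<Rightarrow> 'a) alg) (proj I ` I)"
    unfolding Sg_def
  proof (rule Inter_greatest)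
    fix C assume "C \<in> {C. subuniverse C (FAI I :: ('a, ('i \<Rightarrow> 'a) \<Rightarrow> 'a) alg) \<and> proj I ` I \<subseteq> C}"
    then show "fst (FAI I :: ('a, ('i \<Rightarrow> 'a) \<Rightarrow> 'a) alg) \<subseteq> C" using gen_FAI[of C I] by simp
  qed
qed


theorem mainTheorem4:
  fixes I :: "'i set"
  assumes "infinite (UNIV :: 'a set)"
  shows "(\<forall>i\<in>I. (proj I i :: ('i \<Rightarrow> 'a) \<Rightarrow> 'a) \<in> fst (FAI I :: ('a, ('i \<Rightarrow> 'a) \<Rightarrow> 'a) alg))
    \<and> in_var TYPE('i \<Rightarrow> 'a) (FAI I :: ('a, ('i \<Rightarrow> 'a) \<Rightarrow> 'a) alg)
    \<and> Sg (FAI I :: ('a, ('i \<Rightarrow> 'a) \<Rightarrow> 'a) alg) (proj I ` I) = fst (FAI I :: ('a, ('i \<Rightarrow> 'a) \<Rightarrow> 'a) alg)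
    \<and> (\<forall>(B :: ('a, 'b) alg) (g :: 'i \<Rightarrow> 'b).
         in_var TYPE('j) B \<and> (\<forall>i\<in>I. g i \<in> fst B) \<longrightarrow>
         (\<exists>!\<phi>. \<phi> \<in> extensional (fst (FAI I :: ('a, ('i \<Rightarrow> 'a) \<Rightarrow> 'a) alg))
               \<and> hom \<phi> (FAI I :: ('a, ('i \<Rightarrow> 'a) \<Rightarrow> 'a) alg) B
               \<and> (\<forall>i\<in>I. \<phi> (proj I i) = g i)))"
proof (intro conjI allI impI)
  let ?F = "FAI I :: ('a, ('i \<Rightarrow> 'a) \<Rightarrow> 'a) alg"
  show "\<forall>i\<in>I. (proj I i :: ('i \<Rightarrow> 'a) \<Rightarrow> 'a) \<in> fst ?F" by (intro ballI proj_in)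
  show "Sg ?F (proj I ` I) = fst ?F" by (rule Sg_FAI)
  have isalg: "is_alg ?F" unfolding is_alg_def
  proof (intro allI impI)
    fix s :: "'a osym" and xs assume "valid_sym s \<and> length xs = arity s \<and> set xs \<subseteq> fst ?F"
    then show "snd ?F s xs \<in> fst ?F" by (intro closed_FAI) (simp only:)
  qed
  show "in_var TYPE('i \<Rightarrow> 'a) ?F"
    unfolding in_var_def
  proof (intro conjI isalg exI)
    show "subuniverse (fst ?F) (Omega_pow (powA I) :: ('a, ('i \<Rightarrow> 'a) \<Rightarrow> 'a) alg)"
      unfolding subuniverse_def
    proof (intro conjI allI impI)
      show "fst ?F \<subseteq> fst (Omega_pow (powA I) :: ('a, ('i \<Rightarrow> 'a) \<Rightarrow> 'a) alg)"
        unfolding FAI_def Omega_filt_def by auto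
      fix s :: "'a osym" and xs assume "valid_sym s \<and> length xs = arity s \<and> set xs \<subseteq> fst ?F"
      then have "snd ?F s xs \<in> fst ?F" by (intro closed_FAI) (simp only:)
      then show "snd (Omega_pow (powA I) :: ('a, ('i \<Rightarrow> 'a) \<Rightarrow> 'a) alg) s xs \<in> fst ?F"
        unfolding snd_FAI .
    qed
    show "hom id (fst ?F, snd (Omega_pow (powA I) :: ('a, ('i \<Rightarrow> 'a) \<Rightarrow> 'a) alg)) ?F"
      unfolding hom_def by (simp add: FAI_def Omega_filt_def)
    show "id ` fst ?F = fst ?F" by simp
  qed
  fix B :: "('a, 'b) alg" and g :: "'i \<Rightarrow> 'b"
  assume a: "in_var TYPE('j) B \<and> (\<forall>i\<in>I. g i \<in> fst B)"
  then obtain J :: "'j set" and C \<psi> where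
    C: "subuniverse C (Omega_pow J :: ('a, 'j \<Rightarrow> 'a) alg)" and
    \<psi>: "hom \<psi> (C, snd (Omega_pow J :: ('a, 'j \<Rightarrow> 'a) alg)) B" and
    sur: "\<psi> ` C = fst B"
    unfolding in_var_def by blast
  have gB: "\<And>i. i \<in> I \<Longrightarrow> g i \<in> fst B" using a by blast
  define c where "c = (\<lambda>i. SOME c. c \<in> C \<and> \<psi> c = g i)"
  have c: "\<And>i. i \<in> I \<Longrightarrow> c i \<in> C \<and> \<psi> (c i) = g i"
  proof -
    fix i assume "i \<in> I"
    then have "\<exists>c. c \<in> C \<and> \<psi> c = g i" using gB sur by (metis imageE)
    then show "c i \<in> C \<and> \<psi> (c i) = g i" unfolding c_def by (rule someI_ex)
  qed
  have CJ: "C \<subseteq> J \<rightarrow>\<^sub>E (UNIV :: 'a set)" using C unfolding subuniverse_def Omega_pow_def by simp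
  have Ccl: "\<And>s xs. valid_sym s \<Longrightarrow> length xs = arity s \<Longrightarrow> set xs \<subseteq> C \<Longrightarrow>
      snd (Omega_pow J :: ('a, 'j \<Rightarrow> 'a) alg) s xs \<in> C"
    using C unfolding subuniverse_def by blast
  define fj where "fj = (\<lambda>j. restrict (\<lambda>i. c i j) I)"
  have fj: "\<And>j. fj j \<in> powA I" unfolding fj_def powA_def by simp
  define \<theta> where "\<theta> = (\<lambda>h::('i \<Rightarrow> 'a) \<Rightarrow> 'a. \<lambda>j\<in>J. h (fj j))"
  have \<theta>op: "\<And>s hs. \<theta> (snd ?F s hs) = snd (Omega_pow J :: ('a, 'j \<Rightarrow> 'a) alg) s (map \<theta> hs)"
  proof -
    fix s hs
    show "\<theta> (snd ?F s hs) = snd (Omega_pow J :: ('a, 'j \<Rightarrow> 'a) alg) s (map \<theta> hs)"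
      unfolding \<theta>_def op_FAI Omega_pow_def snd_conv
    proof (rule restrict_ext)
      fix j assume j: "j \<in> J"
      have "map (\<lambda>h. h j) (map (\<lambda>h. \<lambda>j\<in>J. h (fj j)) hs) = map (\<lambda>h. h (fj j)) hs"
        using j by simp
      then show "(\<lambda>x\<in>powA I. omega_op s (map (\<lambda>h. h x) hs)) (fj j) =
          omega_op s (map (\<lambda>h. h j) (map (\<lambda>h. \<lambda>j\<in>J. h (fj j)) hs))"
        using fj[of j] by (simp del: map_map)
    qed
  qed
  have \<theta>proj: "\<And>i. i \<in> I \<Longrightarrow> \<theta> (proj I i) = c i"
  proof -
    fix i assume i: "i \<in> I"
    have "c i \<in> extensional J" using c[OF i] CJ by (auto simp: PiE_def)
    then show "\<theta> (proj I i) = c i"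
      unfolding \<theta>_def proj_def using fj i by (auto simp: fj_def extensional_def)
  qed
  have \<theta>C: "fst ?F \<subseteq> {h \<in> fst ?F. \<theta> h \<in> C}"
  proof (rule gen_FAI)
    show "subuniverse {h \<in> fst ?F. \<theta> h \<in> C} ?F"
      unfolding subuniverse_def
    proof (intro conjI allI impI)
      show "{h \<in> fst ?F. \<theta> h \<in> C} \<subseteq> fst ?F" by blast
      fix s :: "'a osym" and xs assume sx: "valid_sym s \<and> length xs = arity s \<and> set xs \<subseteq> {h \<in> fst ?F. \<theta> h \<in> C}"
      have "snd ?F s xs \<in> fst ?F" using sx by (intro closed_FAI) blast
      moreover have "\<theta> (snd ?F s xs) \<in> C" unfolding \<theta>op using sx by (intro Ccl) auto
      ultimately show "snd ?F s xs \<in> {h \<in> fst ?F. \<theta> h \<in> C}" by blast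
    qed
    show "proj I ` I \<subseteq> {h \<in> fst ?F. \<theta> h \<in> C}" using proj_in \<theta>proj c by auto
  qed
  have \<psi>C: "\<And>x. x \<in> C \<Longrightarrow> \<psi> x \<in> fst B" using \<psi> unfolding hom_def by simp
  have \<psi>op: "\<And>s xs. valid_sym s \<Longrightarrow> length xs = arity s \<Longrightarrow> set xs \<subseteq> C \<Longrightarrow>
      \<psi> (snd (Omega_pow J :: ('a, 'j \<Rightarrow> 'a) alg) s xs) = snd B s (map \<psi> xs)"
    using \<psi> unfolding hom_def by simp
  define \<phi> where "\<phi> = restrict (\<lambda>h. \<psi> (\<theta> h)) (fst ?F)"
  have hom\<phi>: "hom \<phi> ?F B" unfolding hom_def
  proof (intro conjI ballI allI impI)
    fix x assume "x \<in> fst ?F" then show "\<phi> x \<in> fst B" using \<theta>C \<psi>C unfolding \<phi>_def by auto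
  next
    fix s :: "'a osym" and xs assume sx: "valid_sym s \<and> length xs = arity s \<and> set xs \<subseteq> fst ?F"
    have in1: "snd ?F s xs \<in> fst ?F" using sx by (intro closed_FAI) blast
    have sC: "set (map \<theta> xs) \<subseteq> C" using sx \<theta>C by auto
    have "\<phi> (snd ?F s xs) = \<psi> (snd (Omega_pow J :: ('a, 'j \<Rightarrow> 'a) alg) s (map \<theta> xs))"
      unfolding \<phi>_def using in1 \<theta>op by simp
    also have "\<dots> = snd B s (map \<psi> (map \<theta> xs))" using sx sC by (intro \<psi>op) auto
    also have "map \<psi> (map \<theta> xs) = map \<phi> xs" using sx unfolding \<phi>_def by auto
    finally show "\<phi> (snd ?F s xs) = snd B s (map \<phi> xs)" .
  qed
  show "\<exists>!\<phi>. \<phi> \<in> extensional (fst ?F) \<and> hom \<phi> ?F B \<and> (\<forall>i\<in>I. \<phi> (proj I i) = g i)"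
  proof (rule ex1I[of _ \<phi>])
    show "\<phi> \<in> extensional (fst ?F) \<and> hom \<phi> ?F B \<and> (\<forall>i\<in>I. \<phi> (proj I i) = g i)"
    proof (intro conjI)
      show "\<phi> \<in> extensional (fst ?F)" unfolding \<phi>_def by simp
      show "\<forall>i\<in>I. \<phi> (proj I i) = g i"
      proof
        fix i assume i: "i \<in> I"
        have "proj I i \<in> fst ?F" by (rule proj_in[OF i])
        then show "\<phi> (proj I i) = g i" using \<theta>proj[OF i] c[OF i] unfolding \<phi>_def by simp
      qed
      show "hom \<phi> ?F B" by (rule hom\<phi>)
    qed
    fix \<phi>' assume p': "\<phi>' \<in> extensional (fst ?F) \<and> hom \<phi>' ?F B \<and> (\<forall>i\<in>I. \<phi>' (proj I i) = g i)"
    have eqC: "fst ?F \<subseteq> {h \<in> fst ?F. \<phi>' h = \<phi> h}"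
    proof (rule gen_FAI)
      show "subuniverse {h \<in> fst ?F. \<phi>' h = \<phi> h} ?F"
        unfolding subuniverse_def
      proof (intro conjI allI impI)
        show "{h \<in> fst ?F. \<phi>' h = \<phi> h} \<subseteq> fst ?F" by blast
        fix s :: "'a osym" and xs assume sx: "valid_sym s \<and> length xs = arity s \<and> set xs \<subseteq> {h \<in> fst ?F. \<phi>' h = \<phi> h}"
        have in1: "snd ?F s xs \<in> fst ?F" using sx by (intro closed_FAI) blast
        have sF: "set xs \<subseteq> fst ?F" using sx by blast
        have h1: "\<phi>' (snd ?F s xs) = snd B s (map \<phi>' xs)" using p' sx sF unfolding hom_def by blast
        have h2: "\<phi> (snd ?F s xs) = snd B s (map \<phi> xs)"
          using hom\<phi> sF sx unfolding hom_def by blast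
        have m: "map \<phi>' xs = map \<phi> xs" by (rule map_cong[OF refl]) (use sx in blast)
        have "\<phi>' (snd ?F s xs) = \<phi> (snd ?F s xs)" unfolding h1 h2 m ..
        then show "snd ?F s xs \<in> {h \<in> fst ?F. \<phi>' h = \<phi> h}" using in1 by blast
      qed
      show "proj I ` I \<subseteq> {h \<in> fst ?F. \<phi>' h = \<phi> h}"
        using proj_in \<theta>proj c p' unfolding \<phi>_def by auto
    qed
    show "\<phi>' = \<phi>"
    proof
      fix x show "\<phi>' x = \<phi> x"
      proof (cases "x \<in> fst ?F")
        case True then show ?thesis using eqC by blast
      next
        case False then show ?thesis using p' unfolding \<phi>_def extensional_def by simp
      qed
    qed
  qed
qed

end
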